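(* Let $N\ge1$ and $L=\sum_{i=0}^N a_i(x)\partial_x^i$ with $a_i(x)=\sum_{j=0}^i a_{i,j}x^j$ complex polynomials, $a_0\equiv0$, $a_i\equiv0$ for $i>N$. Suppose there are $\lambda_n\in\mathbb{C}$ ($n\ge0$, $\lambda_0=0$, and $\lambda_n\notin\{0,\lambda_1,\ldots,\lambda_{n-1}\}$ for $n\ge1$) and monic polynomials $P_n(x)=\sum_{i=0}^n b_{n,i}x^i$ of degree $n$ with $\sum_{i=1}^Na_i\partial_x^iP_n=\lambda_nP_n$ for all $n\ge0$ (convention: $b_{m,m}=1$, $b_{m,l}=0$ for $l>m$). Let $(\gamma_n)_{n\ge1}$ be nonzero complex numbers and define $P_0^{(1)}=P_0$ and $P_n^{(1)}=P_n+\gamma_nP_{n-1}$ for $n\ge1$. Assume there is a differential operator $L^{(1)}=\sum_{i=0}^{\widetilde N}a^{(1)}_i(x)\partial_x^i$ with complex polynomial coefficients, $\deg a_i^{(1)}\le i$, of order $\widetilde N\ge N$, such that $L^{(1)}P_n^{(1)}=\lambda_nP_n^{(1)}$ for all $n\ge0$. Then for all integers $n,k$ with $n\ge k>\widetilde N$, $$\sum_{j=0}^{k-1}(-1)^j\left[\sum_{s=1}^N\binom{n-k+j}{s-1}s!\,a_{s,s}\right]b_{n-k+j,n-k}\sum_{r=1}^{k-j}\gamma_{n-k+j+1}\cdots\gamma_{n-k+j+r}\,E_{k,n,j+r-1}=0,$$ where, for $0\le t\le k-1$, $E_{k,n,t}$ is the determinant of the $(k-t-1)\times(k-t-1)$ matrix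 whose $(\rho,c)$ entry ($1\le\rho,c\le k-t-1$) is $b_{n-k+t+1+c,\;n-k+t+\rho}$, and $E_{k,n,k-1}=1$.
   Context: $\partial_x^i$ denotes the $i$-th derivative in $x$. With the convention $b_{m,m}=1$, $b_{m,l}=0$ for $l>m$, the matrix defining $E_{k,n,t}$ is upper Hessenberg with first row $b_{n-k+t+2,n-k+t+1},\ldots,b_{n,n-k+t+1}$, ones on the subdiagonal and zeros below it. *)

theory Defs
  imports "HOL-Computational_Algebra.Polynomial" "Jordan_Normal_Form.Determinant"
begin

definition diff_op :: "(nat \<Rightarrow> complex poly) \<Rightarrow> nat \<Rightarrow> nat \<Rightarrow> complex poly \<Rightarrow> complex poly" where
  "diff_op c lo M p = (\<Sum>i=lo..M. c i * (pderiv ^^ i) p)"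

text \<open>E k n t: determinant of the (k-t-1) x (k-t-1) matrix with (rho,c) entry
  b_{n-k+t+1+c, n-k+t+rho} (1-indexed), where b m l = coeff (P m) l; E k n (k-1) = 1.\<close>
definition E_det :: "(nat \<Rightarrow> complex poly) \<Rightarrow> nat \<Rightarrow> nat \<Rightarrow> nat \<Rightarrow> complex" where
  "E_det P k n t = (if t = k - 1 then 1 else
     det (mat (k - t - 1) (k - t - 1)
       (\<lambda>(i, j). coeff (P (n - k + t + 2 + j)) (n - k + t + 1 + i))))"

end

theory Submission
  imports Defs
begin

lemma hess_det:
  fixes f :: "nat \<times> nat \<Rightarrow> 'a::comm_ring_1"
  assumes "\<And>i j. i > Suc j \<Longrightarrow> f (i,j) = 0" "\<And>j. f (Suc j, j) = 1"
  shows "det (mat (Suc s) (Suc s) f) = (\<Sum>c\<le>s. (-1)^c * f (0,c) *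
           det (mat (s-c) (s-c) (\<lambda>(i,j). f (i+c+1, j+c+1))))"
  using assms
proof (induction s arbitrary: f)
  case 0
  have "det (mat (Suc 0) (Suc 0) f) = (\<Sum>i<Suc 0. mat (Suc 0) (Suc 0) f $$ (i,0) * cofactor (mat (Suc 0) (Suc 0) f) i 0)"
    by (rule laplace_expansion_column) auto
  also have "\<dots> = f (0,0)"
  proof -
    have "mat_delete (mat (Suc 0) (Suc 0) f) 0 0 \<in> carrier_mat 0 0" by (simp add: mat_delete_def)
    then show ?thesis by (simp add: cofactor_def)
  qed
  finally show ?case by simp
next
  case (Suc s)
  let ?A = "mat (Suc (Suc s)) (Suc (Suc s)) f"
  define g where "g = (\<lambda>(i,j). f (if i < 1 then i else Suc i, Suc j))"
  have "det ?A = (\<Sum>i<Suc (Suc s). ?A $$ (i,0) * cofactor ?A i 0)"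
    by (rule laplace_expansion_column) auto
  also have "\<dots> = f (0,0) * cofactor ?A 0 0 + f (1,0) * cofactor ?A 1 0"
  proof -
    have "(\<Sum>i<Suc (Suc s). ?A $$ (i,0) * cofactor ?A i 0) =
       ?A $$ (0,0) * cofactor ?A 0 0 + (?A $$ (1,0) * cofactor ?A 1 0 +
        (\<Sum>i<s. ?A $$ (Suc (Suc i),0) * cofactor ?A (Suc (Suc i)) 0))"
      by (simp only: sum.lessThan_Suc_shift) simp
    also have "(\<Sum>i<s. ?A $$ (Suc (Suc i),0) * cofactor ?A (Suc (Suc i)) 0) = 0"
      using Suc.prems(1) by (intro sum.neutral) auto
    finally show ?thesis by simp
  qed
  finally have 0: "det ?A = f (0,0) * cofactor ?A 0 0 + f (1,0) * cofactor ?A 1 0" .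
  have d0: "mat_delete ?A 0 0 = mat (Suc s) (Suc s) (\<lambda>(i,j). f (i+1, j+1))"
    by (rule eq_matI) (auto simp: mat_delete_def)
  have d1: "mat_delete ?A 1 0 = mat (Suc s) (Suc s) g"
    by (rule eq_matI) (auto simp: mat_delete_def g_def)
  have 1: "det ?A = f (0,0) * det (mat (Suc s) (Suc s) (\<lambda>(i,j). f (i+1, j+1)))
       - det (mat (Suc s) (Suc s) g)"
    using Suc.prems(2)[of 0] unfolding 0 by (simp add: cofactor_def d0 d1[simplified])
  have g1: "g (i,j) = 0" if "i > Suc j" for i j
    using Suc.prems(1) that by (auto simp: g_def)
  have g2: "g (Suc j, j) = 1" for j
    using Suc.prems(2) by (auto simp: g_def)
  have 2: "det (mat (Suc s) (Suc s) g) = (\<Sum>c\<le>s. (-1)^c * f (0,Suc c) *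
           det (mat (s-c) (s-c) (\<lambda>(i,j). f (i+Suc c+1, j+Suc c+1))))"
  proof -
    have "det (mat (Suc s) (Suc s) g) = (\<Sum>c\<le>s. (-1)^c * g (0,c) *
           det (mat (s-c) (s-c) (\<lambda>(i,j). g (i+c+1, j+c+1))))"
      by (rule Suc.IH) (use g1 g2 in auto)
    also have "\<dots> = (\<Sum>c\<le>s. (-1)^c * f (0,Suc c) *
           det (mat (s-c) (s-c) (\<lambda>(i,j). f (i+Suc c+1, j+Suc c+1))))"
    proof (rule sum.cong[OF refl])
      fix c assume "c \<in> {..s}"
      have "mat (s-c) (s-c) (\<lambda>(i,j). g (i+c+1, j+c+1)) = mat (s-c) (s-c) (\<lambda>(i,j). f (i+Suc c+1, j+Suc c+1))"
        by (rule eq_matI) (auto simp: g_def)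
      then show "(-1)^c * g (0,c) * det (mat (s-c) (s-c) (\<lambda>(i,j). g (i+c+1, j+c+1))) =
        (-1)^c * f (0,Suc c) * det (mat (s-c) (s-c) (\<lambda>(i,j). f (i+Suc c+1, j+Suc c+1)))"
        by (simp add: g_def)
    qed
    finally show ?thesis .
  qed
  show ?case
    unfolding 1 2 sum.atMost_Suc_shift
    by (simp add: sum_negf algebra_simps)
qed


definition Dd :: "(nat \<Rightarrow> complex poly) \<Rightarrow> nat \<Rightarrow> nat \<Rightarrow> complex" where
  "Dd P n q = det (mat (n-q) (n-q) (\<lambda>(i,j). coeff (P (q+1+j)) (q+i)))"

lemma Dd_same: "Dd P n n = 1"
  unfolding Dd_def by (rule det_dim_zero) auto

lemma Dd_rec:
  assumes P_deg: "\<And>n. degree (P n) = n" and P_monic: "\<And>n. coeff (P n) n = 1"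
    and q: "q < n"
  shows "Dd P n q = (\<Sum>c\<le>n-q-1. (-1)^c * coeff (P (q+1+c)) q * Dd P n (q+1+c))"
proof -
  define s where "s = n - q - 1"
  have ns: "n - q = Suc s" using q by (simp add: s_def)
  have "Dd P n q = det (mat (Suc s) (Suc s) (\<lambda>(i,j). coeff (P (q+1+j)) (q+i)))"
    unfolding Dd_def ns ..
  also have "\<dots> = (\<Sum>c\<le>s. (-1)^c * (\<lambda>(i,j). coeff (P (q+1+j)) (q+i)) (0,c) *
           det (mat (s-c) (s-c) (\<lambda>(i,j). (\<lambda>(i,j). coeff (P (q+1+j)) (q+i)) (i+c+1, j+c+1))))"
  proof (rule hess_det)
    fix i j :: nat assume "i > Suc j"
    then show "(\<lambda>(i,j). coeff (P (q+1+j)) (q+i)) (i,j) = 0"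
      by (simp add: coeff_eq_0 P_deg)
  next
    fix j show "(\<lambda>(i,j). coeff (P (q+1+j)) (q+i)) (Suc j,j) = 1"
      using P_monic[of "q+1+j"] by (simp add: add.commute add.left_commute)
  qed
  also have "\<dots> = (\<Sum>c\<le>s. (-1)^c * coeff (P (q+1+c)) q * Dd P n (q+1+c))"
  proof (rule sum.cong[OF refl])
    fix c assume c: "c \<in> {..s}"
    have e: "n - (q+1+c) = s - c" using c q by (simp add: s_def)
    have "mat (s-c) (s-c) (\<lambda>(i,j). (\<lambda>(i,j). coeff (P (q+1+j)) (q+i)) (i+c+1, j+c+1))
        = mat (s-c) (s-c) (\<lambda>(i,j). coeff (P (q+1+c+1+j)) (q+1+c+i))"
      by (rule eq_matI) (auto simp: algebra_simps)
    then show "(-1)^c * (\<lambda>(i,j). coeff (P (q+1+j)) (q+i)) (0,c) *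
           det (mat (s-c) (s-c) (\<lambda>(i,j). (\<lambda>(i,j). coeff (P (q+1+j)) (q+i)) (i+c+1, j+c+1)))
        = (-1)^c * coeff (P (q+1+c)) q * Dd P n (q+1+c)"
      unfolding Dd_def e by simp
  qed
  finally show ?thesis by (simp add: s_def)
qed

lemma sign1: "c \<le> d \<Longrightarrow> (-1::complex)^(Suc d) * (-1)^c = -((-1)^(d-c))"
proof -
  assume "c \<le> d"
  then obtain e where "d = c + e" using le_Suc_ex by blast
  then show ?thesis by (simp add: power_add flip: power_mult_distrib)
qed

lemma monom_expand:
  assumes P_deg: "\<And>n. degree (P n) = n" and P_monic: "\<And>n. coeff (P n) n = 1"
  shows "monom 1 n = (\<Sum>m\<le>n. smult ((-1)^(n-m) * Dd P n m) (P m))"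
proof (rule poly_eqI)
  fix q
  have "coeff (\<Sum>m\<le>n. smult ((-1)^(n-m) * Dd P n m) (P m)) q
      = (\<Sum>m\<le>n. (-1)^(n-m) * Dd P n m * coeff (P m) q)"
    by (simp add: coeff_sum)
  also have "\<dots> = (if n = q then 1 else 0)"
  proof (cases "q \<le> n")
    case False
    then show ?thesis by (auto intro!: sum.neutral simp: coeff_eq_0 P_deg)
  next
    case True
    define F where "F m = (-1::complex)^(n-m) * Dd P n m * coeff (P m) q" for m
    have split: "(\<Sum>m\<le>n. F m) = (\<Sum>m<q. F m) + (\<Sum>c\<le>n-q. F (q+c))"
    proof -
      have "{..n} = {..<q} \<union> {q..n}" using True by auto
      then have "(\<Sum>m\<le>n. F m) = (\<Sum>m<q. F m) + (\<Sum>m\<in>{q..n}. F m)"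
        using sum.union_disjoint[of "{..<q}" "{q..n}" F] by (simp add: ivl_disj_int)
      also have "(\<Sum>m\<in>{q..n}. F m) = (\<Sum>c\<le>n-q. F (q+c))"
      proof -
        have "(\<Sum>m\<in>{q..n}. F m) = (\<Sum>m\<in>{0+q..(n-q)+q}. F m)" using True by simp
        also have "\<dots> = (\<Sum>c\<in>{0..n-q}. F (c+q))" by (rule sum.shift_bounds_cl_nat_ivl)
        finally show ?thesis by (simp add: atLeast0AtMost add.commute)
      qed
      finally show ?thesis .
    qed
    have low: "(\<Sum>m<q. F m) = 0"
      by (auto intro!: sum.neutral simp: F_def coeff_eq_0 P_deg)
    show ?thesis
    proof (cases "q = n")
      case True
      then show ?thesis using split low by (simp add: F_def Dd_same P_monic)
    next
      case False
      with True have qn: "q < n" by simp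
      have nq: "n - q = Suc (n-q-1)" using qn by simp
      have "(\<Sum>c\<le>n-q. F (q+c)) = F q + (\<Sum>c\<le>n-q-1. F (q+1+c))"
      proof -
        obtain d where d: "n - q = Suc d" "n-q-1 = d" using nq by blast
        show ?thesis unfolding d sum.atMost_Suc_shift by simp
      qed
      also have "F q = (-1)^(Suc (n-q-1)) * Dd P n q"
        by (simp only: F_def P_monic mult_1_right nq[symmetric])
      also have "\<dots> = (\<Sum>c\<le>n-q-1. (-1)^(Suc (n-q-1)) * (-1)^c * coeff (P (q+1+c)) q * Dd P n (q+1+c))"
        by (subst Dd_rec[OF P_deg P_monic qn]) (simp add: sum_distrib_left mult.assoc)
      also have "\<dots> = (\<Sum>c\<le>n-q-1. - F (q+1+c))"
      proof (rule sum.cong[OF refl])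
        fix c assume "c \<in> {..n-q-1}"
        then have "c \<le> n-q-1" by simp
        from sign1[OF this] have "(-1::complex)^(Suc (n-q-1)) * (-1)^c = -((-1)^(n-q-1-c))" .
        moreover have "n - (q+1+c) = n-q-1-c" by simp
        ultimately show "(-1)^(Suc (n-q-1)) * (-1)^c * coeff (P (q+1+c)) q * Dd P n (q+1+c) = - F (q+1+c)"
          by (simp add: F_def)
      qed
      finally show ?thesis using split low False by (simp add: F_def sum_negf)
    qed
  qed
  finally show "coeff (monom 1 n) q = coeff (\<Sum>m\<le>n. smult ((-1)^(n-m) * Dd P n m) (P m)) q"
    by (simp add: coeff_monom)
qed


lemma diff_op_add: "diff_op c lo M (p + q) = diff_op c lo M p + diff_op c lo M q"
  by (simp add: diff_op_def higher_pderiv_add distrib_left sum.distrib)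

lemma smult_sum_right: "smult a (\<Sum>x\<in>A. f x) = (\<Sum>x\<in>A. smult a (f x))"
  by (induction A rule: infinite_finite_induct) (simp_all add: smult_add_right)

lemma diff_op_smult: "diff_op c lo M (smult a p) = smult a (diff_op c lo M p)"
  by (simp add: diff_op_def higher_pderiv_smult smult_sum_right)

lemma diff_op_zero: "diff_op c lo M 0 = 0"
  by (simp add: diff_op_def)

lemma diff_op_sum: "diff_op c lo M (\<Sum>x\<in>A. f x) = (\<Sum>x\<in>A. diff_op c lo M (f x))"
  by (induction A rule: infinite_finite_induct) (simp_all add: diff_op_zero diff_op_add)

lemma diff_op_diff: "diff_op c lo M (p - q) = diff_op c lo M p - diff_op c lo M q"
proof -
  have "diff_op c lo M p = diff_op c lo M (p - q) + diff_op c lo M q"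
    using diff_op_add[of c lo M "p - q" q] by simp
  then show ?thesis by simp
qed

lemma coeff_diff_op_monom_low:
  assumes "w + M < n"
  shows "coeff (diff_op c lo M (monom 1 n)) w = 0"
proof -
  have "coeff (c i * (pderiv ^^ i) (monom 1 n)) w = 0" if "i \<in> {lo..M}" for i
  proof -
    have "coeff ((pderiv ^^ i) (monom 1 n)) (w - l) = 0" if "l \<le> w" for l
      using assms \<open>i \<in> {lo..M}\<close> that by (auto simp: coeff_higher_pderiv coeff_monom)
    then show ?thesis unfolding coeff_mult by (intro sum.neutral) auto
  qed
  then show ?thesis by (simp add: diff_op_def coeff_sum)
qed

lemma coeff_top:
  fixes A p :: "complex poly"
  assumes "degree A \<le> s" "degree p \<le> m"
  shows "coeff (A * (pderiv ^^ s) p) m =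
    (if s \<le> m then coeff A s * pochhammer (of_nat (Suc (m-s))) s * coeff p m else 0)"
proof -
  define F where "F l = coeff A l * (pochhammer (of_nat (Suc (m-l))) s * coeff p (m-l+s))" for l
  have eq: "coeff (A * (pderiv ^^ s) p) m = (\<Sum>l\<le>m. F l)"
    by (simp add: coeff_mult coeff_higher_pderiv F_def)
  have z: "F l = 0" if "l \<le> m" "l \<noteq> s" for l
  proof (cases "l < s")
    case True
    then have "m - l + s > m" using that by simp
    then show ?thesis using assms by (simp add: F_def coeff_eq_0)
  next
    case False
    then show ?thesis using assms that by (simp add: F_def coeff_eq_0)
  qed
  show ?thesis
  proof (cases "s \<le> m")
    case True
    have "(\<Sum>l\<le>m. F l) = F s + (\<Sum>l\<in>{..m}-{s}. F l)"
      using True by (subst sum.remove[of _ s]) auto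
    also have "(\<Sum>l\<in>{..m}-{s}. F l) = 0" using z by (intro sum.neutral) auto
    finally show ?thesis using True eq by (simp add: F_def)
  next
    case False
    then show ?thesis using eq z by (auto intro!: sum.neutral)
  qed
qed

lemma poch_choose:
  assumes "s \<le> m"
  shows "pochhammer (of_nat (Suc (m-s))) s = (of_nat (m choose s) * fact s :: complex)"
proof -
  have "(of_nat (m choose s) :: complex) = of_nat m gchoose s" by (rule binomial_gbinomial)
  also have "\<dots> = pochhammer (of_nat m - of_nat s + 1) s / fact s" by (rule gbinomial_pochhammer')
  also have "(of_nat m - of_nat s + 1 :: complex) = of_nat (Suc (m-s))" using assms by (simp add: of_nat_diff)
  finally show ?thesis by simp
qed

lemma lam_formula:
  fixes a :: "nat \<Rightarrow> complex poly" and P :: "nat \<Rightarrow> complex poly"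
  assumes a_deg: "\<And>i. degree (a i) \<le> i"
    and P_deg: "\<And>n. degree (P n) = n" and P_monic: "\<And>n. coeff (P n) n = 1"
    and eig: "diff_op a 1 N (P m) = smult l (P m)"
  shows "l = (\<Sum>s=1..N. of_nat (m choose s) * fact s * coeff (a s) s)"
proof -
  have "l = coeff (diff_op a 1 N (P m)) m" using eig P_monic by simp
  also have "\<dots> = (\<Sum>s=1..N. coeff (a s * (pderiv ^^ s) (P m)) m)"
    by (simp add: diff_op_def coeff_sum)
  also have "\<dots> = (\<Sum>s=1..N. of_nat (m choose s) * fact s * coeff (a s) s)"
  proof (rule sum.cong[OF refl])
    fix s
    show "coeff (a s * (pderiv ^^ s) (P m)) m = of_nat (m choose s) * fact s * coeff (a s) s"
      using coeff_top[OF a_deg[of s], of "P m" m] P_deg P_monic poch_choose[of s m]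
      by (auto simp: binomial_eq_0)
  qed
  finally show ?thesis .
qed

lemma bracket:
  fixes a :: "nat \<Rightarrow> complex poly"
  assumes "\<And>m. lam m = (\<Sum>s=1..N. of_nat (m choose s) * fact s * coeff (a s) s)"
  shows "(\<Sum>s=1..N. of_nat (p choose (s - 1)) * fact s * coeff (a s) s) = lam (Suc p) - lam p"
  unfolding assms sum_subtractf[symmetric]
proof (rule sum.cong[OF refl])
  fix s assume "s \<in> {1..N}"
  then obtain s' where s: "s = Suc s'" by (cases s) auto
  show "of_nat (p choose (s - 1)) * fact s * coeff (a s) s =
      of_nat (Suc p choose s) * fact s * coeff (a s) s - of_nat (p choose s) * fact s * coeff (a s) s"
    unfolding s by (simp add: algebra_simps)
qed


lemma sum_lessThan_add_split:
  "(\<Sum>p<w+k. G p) = (\<Sum>p<w. G p) + (\<Sum>j<k. G (w+j))" for G :: "nat \<Rightarrow> 'a::comm_monoid_add"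
  by (induction k) (simp_all add: add.assoc)

theorem theorem3:
  fixes N Nt :: nat
    and a a1 :: "nat \<Rightarrow> complex poly"
    and lam \<gamma> :: "nat \<Rightarrow> complex"
    and P P1 :: "nat \<Rightarrow> complex poly"
  assumes N_ge: "N \<ge> 1"
    and a_deg: "\<And>i. degree (a i) \<le> i"
    and a0: "a 0 = 0"
    and a_big: "\<And>i. i > N \<Longrightarrow> a i = 0"
    and lam0: "lam 0 = 0"
    and lam_distinct: "\<And>n. n \<ge> 1 \<Longrightarrow> lam n \<notin> {0} \<union> lam ` {1..<n}"
    and P_deg: "\<And>n. degree (P n) = n"
    and P_monic: "\<And>n. coeff (P n) n = 1"
    and P_eig: "\<And>n. diff_op a 1 N (P n) = smult (lam n) (P n)"
    and \<gamma>_nz: "\<And>n. n \<ge> 1 \<Longrightarrow> \<gamma> n \<noteq> 0"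
    and P1_0: "P1 0 = P 0"
    and P1_Suc: "\<And>n. n \<ge> 1 \<Longrightarrow> P1 n = P n + smult (\<gamma> n) (P (n - 1))"
    and a1_deg: "\<And>i. degree (a1 i) \<le> i"
    and a1_order: "a1 Nt \<noteq> 0"
    and Nt_ge: "Nt \<ge> N"
    and P1_eig: "\<And>n. diff_op a1 0 Nt (P1 n) = smult (lam n) (P1 n)"
  shows "\<And>n k. Nt < k \<Longrightarrow> k \<le> n \<Longrightarrow>
    (\<Sum>j=0..k-1. (-1)^j
        * (\<Sum>s=1..N. of_nat ((n - k + j) choose (s - 1)) * fact s * coeff (a s) s)
        * coeff (P (n - k + j)) (n - k)
        * (\<Sum>r=1..k-j. (\<Prod>i=1..r. \<gamma> (n - k + j + i)) * E_det P k n (j + r - 1))) = 0"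
proof -
  fix n k :: nat
  assume hk: "Nt < k" and hn: "k \<le> n"
  define w where "w = n - k"
  have nw: "n = w + k" using hn by (simp add: w_def)
  define R where "R m = diff_op a1 0 Nt (P m) - smult (lam m) (P m)" for m
  define \<Gamma> where "\<Gamma> p m = (\<Prod>i\<in>{Suc p..m}. \<gamma> i)" for p m
  define \<Delta> where "\<Delta> p = lam (Suc p) - lam p" for p
  define b where "b p = coeff (P p) w" for p
  have R0: "R 0 = 0" using P1_eig[of 0] P1_0 by (simp add: R_def)
  have RS: "R (Suc m) = smult (\<gamma> (Suc m) * \<Delta> m) (P m) - smult (\<gamma> (Suc m)) (R m)" for m
  proof -
    have e: "diff_op a1 0 Nt (P (Suc m)) + smult (\<gamma> (Suc m)) (diff_op a1 0 Nt (P m))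
        = smult (lam (Suc m)) (P (Suc m)) + smult (lam (Suc m) * \<gamma> (Suc m)) (P m)"
      using P1_eig[of "Suc m"] P1_Suc[of "Suc m"] by (simp add: diff_op_add diff_op_smult smult_add_right)
    have "R (Suc m) = smult (lam (Suc m) * \<gamma> (Suc m)) (P m) - smult (\<gamma> (Suc m)) (diff_op a1 0 Nt (P m))"
      unfolding R_def using e by (simp add: algebra_simps)
    also have "diff_op a1 0 Nt (P m) = R m + smult (lam m) (P m)" by (simp add: R_def)
    finally show ?thesis by (simp add: \<Delta>_def smult_add_right smult_diff_left algebra_simps)
  qed
  have Rc: "coeff (R m) w = (\<Sum>p<m. (-1)^(m-1-p) * \<Gamma> p m * \<Delta> p * b p)" for m
  proof (induction m)
    case 0
    then show ?case by (simp add: R0)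
  next
    case (Suc m)
    have "coeff (R (Suc m)) w = \<gamma> (Suc m) * \<Delta> m * b m - \<gamma> (Suc m) * (\<Sum>p<m. (-1)^(m-1-p) * \<Gamma> p m * \<Delta> p * b p)"
      unfolding RS by (simp add: Suc.IH b_def)
    also have "\<gamma> (Suc m) * (\<Sum>p<m. (-1)^(m-1-p) * \<Gamma> p m * \<Delta> p * b p)
        = - (\<Sum>p<m. (-1)^(Suc m-1-p) * \<Gamma> p (Suc m) * \<Delta> p * b p)"
      unfolding sum_distrib_left sum_negf[symmetric]
    proof (rule sum.cong[OF refl])
      fix p assume "p \<in> {..<m}"
      then have p: "p < m" by simp
      have g: "\<Gamma> p (Suc m) = \<gamma> (Suc m) * \<Gamma> p m" unfolding \<Gamma>_def
        using p by (simp add: prod.nat_ivl_Suc')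
      have s: "Suc m - 1 - p = Suc (m-1-p)" using p by simp
      show "\<gamma> (Suc m) * ((-1)^(m-1-p) * \<Gamma> p m * \<Delta> p * b p) =
          - ((-1)^(Suc m-1-p) * \<Gamma> p (Suc m) * \<Delta> p * b p)"
        unfolding g s by simp
    qed
    finally show ?case by (simp add: \<Gamma>_def)
  qed
  have mono: "monom 1 n = (\<Sum>m\<le>n. smult ((-1)^(n-m) * Dd P n m) (P m))"
    by (rule monom_expand[OF P_deg P_monic])
  have L1x: "coeff (diff_op a1 0 Nt (monom 1 n)) w = 0"
    by (rule coeff_diff_op_monom_low) (use hk nw in simp)
  have Lx: "coeff (diff_op a 1 N (monom 1 n)) w = 0"
    by (rule coeff_diff_op_monom_low) (use hk nw Nt_ge in simp)
  have diffeq: "diff_op a1 0 Nt (monom 1 n) - diff_op a 1 N (monom 1 n)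
      = (\<Sum>m\<le>n. smult ((-1)^(n-m) * Dd P n m) (R m))"
  proof -
    have "diff_op a1 0 Nt (P m) = R m + smult (lam m) (P m)" for m by (simp add: R_def)
    then show ?thesis
      apply (subst (1 2) mono)
      by (simp add: diff_op_sum diff_op_smult P_eig P_eig[simplified] smult_add_right sum.distrib)
  qed
  have S0: "(\<Sum>m\<le>n. (-1)^(n-m) * Dd P n m * coeff (R m) w) = 0"
  proof -
    have "coeff (diff_op a1 0 Nt (monom 1 n) - diff_op a 1 N (monom 1 n)) w = 0"
      using L1x Lx by simp
    then show ?thesis unfolding diffeq by (simp add: coeff_sum)
  qed
  define H where "H m p = (-1)^(n-m) * Dd P n m * ((-1)^(m-1-p) * \<Gamma> p m * \<Delta> p * b p)" for m p
  define X where "X j = (\<Sum>r=1..k-j. \<Gamma> (w+j) (w+j+r) * Dd P n (w+j+r))" for j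
  have S1: "(\<Sum>m\<le>n. (\<Sum>p<m. H m p)) = 0"
    using S0 unfolding Rc H_def by (simp add: sum_distrib_left)
  have swap: "(\<Sum>m\<le>n. (\<Sum>p<m. H m p)) = (\<Sum>p<n. (\<Sum>m\<in>{Suc p..n}. H m p))"
  proof -
    have "(\<Sum>m\<le>n. (\<Sum>p<m. H m p)) = (\<Sum>m\<in>{..n}. (\<Sum>p\<in>{p\<in>{..<n}. p < m}. H m p))"
      by (intro sum.cong refl) auto
    also have "\<dots> = (\<Sum>p\<in>{..<n}. (\<Sum>m\<in>{m\<in>{..n}. p < m}. H m p))"
      by (rule sum.swap_restrict) auto
    also have "\<dots> = (\<Sum>p<n. (\<Sum>m\<in>{Suc p..n}. H m p))"
      by (intro sum.cong refl) auto
    finally show ?thesis .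
  qed
  have Gj: "(\<Sum>m\<in>{Suc (w+j)..n}. H m (w+j)) = (-1)^(k-1-j) * \<Delta> (w+j) * b (w+j) * X j"
    if j: "j < k" for j
  proof -
    have "(\<Sum>m\<in>{Suc (w+j)..n}. H m (w+j)) = (\<Sum>m\<in>{1+(w+j)..(k-j)+(w+j)}. H m (w+j))"
      using j nw by (simp add: add.commute)
    also have "\<dots> = (\<Sum>r\<in>{1..k-j}. H (r+(w+j)) (w+j))"
      by (rule sum.shift_bounds_cl_nat_ivl)
    also have "\<dots> = (\<Sum>r\<in>{1..k-j}. (-1)^(k-1-j) * \<Delta> (w+j) * b (w+j) * (\<Gamma> (w+j) (w+j+r) * Dd P n (w+j+r)))"
    proof (rule sum.cong[OF refl])
      fix r assume r: "r \<in> {1..k-j}"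
      have "(-1::complex)^(n-(r+(w+j))) * (-1)^(r+(w+j)-1-(w+j)) = (-1)^((n-(r+(w+j))) + (r+(w+j)-1-(w+j)))"
        by (simp add: power_add)
      also have "(n-(r+(w+j))) + (r+(w+j)-1-(w+j)) = k-1-j" using r nw by auto
      finally have sg: "(-1::complex)^(n-(r+(w+j))) * (-1)^(r+(w+j)-1-(w+j)) = (-1)^(k-1-j)" .
      show "H (r+(w+j)) (w+j) = (-1)^(k-1-j) * \<Delta> (w+j) * b (w+j) * (\<Gamma> (w+j) (w+j+r) * Dd P n (w+j+r))"
        unfolding H_def sg[symmetric] by (simp add: algebra_simps)
    qed
    also have "\<dots> = (-1)^(k-1-j) * \<Delta> (w+j) * b (w+j) * X j"
      unfolding X_def sum_distrib_left by simp
    finally show ?thesis .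
  qed
  have S2: "(\<Sum>j<k. (-1)^(k-1-j) * \<Delta> (w+j) * b (w+j) * X j) = 0"
  proof -
    have "(\<Sum>p<n. (\<Sum>m\<in>{Suc p..n}. H m p)) = (\<Sum>p<w. (\<Sum>m\<in>{Suc p..n}. H m p)) + (\<Sum>j<k. (\<Sum>m\<in>{Suc (w+j)..n}. H m (w+j)))"
      unfolding nw by (rule sum_lessThan_add_split)
    also have "(\<Sum>p<w. (\<Sum>m\<in>{Suc p..n}. H m p)) = 0"
      by (intro sum.neutral ballI) (auto simp: H_def b_def coeff_eq_0 P_deg)
    also have "(\<Sum>j<k. (\<Sum>m\<in>{Suc (w+j)..n}. H m (w+j))) = (\<Sum>j<k. (-1)^(k-1-j) * \<Delta> (w+j) * b (w+j) * X j)"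
      by (intro sum.cong refl Gj) auto
    finally show ?thesis using S1 swap by simp
  qed
  have lamf: "\<And>m. lam m = (\<Sum>s=1..N. of_nat (m choose s) * fact s * coeff (a s) s)"
    by (rule lam_formula[OF a_deg P_deg P_monic P_eig])
  have T: "(\<Sum>j=0..k-1. (-1)^j
        * (\<Sum>s=1..N. of_nat ((n - k + j) choose (s - 1)) * fact s * coeff (a s) s)
        * coeff (P (n - k + j)) (n - k)
        * (\<Sum>r=1..k-j. (\<Prod>i=1..r. \<gamma> (n - k + j + i)) * E_det P k n (j + r - 1)))
      = (\<Sum>j<k. (-1)^j * \<Delta> (w+j) * b (w+j) * X j)"
  proof -
    have kk: "{0..k-1} = {..<k}" using hk by auto
    show ?thesis unfolding kk
    proof (rule sum.cong[OF refl])
      fix j assume "j \<in> {..<k}"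
      then have j: "j < k" by simp
      have br: "(\<Sum>s=1..N. of_nat ((n - k + j) choose (s - 1)) * fact s * coeff (a s) s) = \<Delta> (w+j)"
        unfolding \<Delta>_def w_def by (rule bracket[OF lamf])
      have inner: "(\<Sum>r=1..k-j. (\<Prod>i=1..r. \<gamma> (n - k + j + i)) * E_det P k n (j + r - 1)) = X j"
        unfolding X_def
      proof (rule sum.cong[OF refl])
        fix r assume r: "r \<in> {1..k-j}"
        have pr: "(\<Prod>i=1..r. \<gamma> (n - k + j + i)) = \<Gamma> (w+j) (w+j+r)"
        proof -
          have "\<Gamma> (w+j) (w+j+r) = (\<Prod>i\<in>{1+(w+j)..r+(w+j)}. \<gamma> i)"
            unfolding \<Gamma>_def by (simp add: add.commute)
          also have "\<dots> = (\<Prod>i\<in>{1..r}. \<gamma> (i+(w+j)))" by (rule prod.shift_bounds_cl_nat_ivl)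
          finally show ?thesis by (simp add: w_def add.commute add.left_commute)
        qed
        have ed: "E_det P k n (j + r - 1) = Dd P n (w+j+r)"
        proof (cases "j + r - 1 = k - 1")
          case True
          then have "w+j+r = n" using r j nw by auto
          then show ?thesis using True by (simp add: E_det_def Dd_same)
        next
          case False
          obtain r' where r': "r = Suc r'" using r by (cases r) auto
          have sz: "k - (j + r - 1) - 1 = n - (w+j+r)" using r nw by auto
          show ?thesis unfolding E_det_def Dd_def sz if_not_P[OF False]
            by (intro arg_cong[where f=det] eq_matI) (auto simp: r' w_def algebra_simps)
        qed
        show "(\<Prod>i=1..r. \<gamma> (n - k + j + i)) * E_det P k n (j + r - 1) = \<Gamma> (w+j) (w+j+r) * Dd P n (w+j+r)"
          using pr ed by simp
      qed
      show "(-1)^j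
        * (\<Sum>s=1..N. of_nat ((n - k + j) choose (s - 1)) * fact s * coeff (a s) s)
        * coeff (P (n - k + j)) (n - k)
        * (\<Sum>r=1..k-j. (\<Prod>i=1..r. \<gamma> (n - k + j + i)) * E_det P k n (j + r - 1))
        = (-1)^j * \<Delta> (w+j) * b (w+j) * X j"
        unfolding br inner by (simp add: b_def w_def)
    qed
  qed
  have "(\<Sum>j<k. (-1)^(k-1-j) * \<Delta> (w+j) * b (w+j) * X j) = (-1)^(k-1) * (\<Sum>j<k. (-1)^j * \<Delta> (w+j) * b (w+j) * X j)"
    unfolding sum_distrib_left
  proof (rule sum.cong[OF refl])
    fix j assume "j \<in> {..<k}"
    then have "k - 1 = (k-1-j) + j" by auto
    then have "(-1::complex)^(k-1) * (-1)^j = (-1)^(k-1-j) * ((-1)^j * (-1)^j)"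
      by (metis power_add mult.assoc)
    also have "(-1::complex)^j * (-1)^j = 1" by (simp flip: power_add power_mult_distrib)
    finally have "(-1::complex)^(k-1) * (-1)^j = (-1)^(k-1-j)" by simp
    then show "(-1)^(k-1-j) * \<Delta> (w+j) * b (w+j) * X j = (-1)^(k-1) * ((-1)^j * \<Delta> (w+j) * b (w+j) * X j)"
      by (metis mult.assoc)
  qed
  with S2 have "(\<Sum>j<k. (-1)^j * \<Delta> (w+j) * b (w+j) * X j) = 0" by simp
  with T show "(\<Sum>j=0..k-1. (-1)^j
        * (\<Sum>s=1..N. of_nat ((n - k + j) choose (s - 1)) * fact s * coeff (a s) s)
        * coeff (P (n - k + j)) (n - k)
        * (\<Sum>r=1..k-j. (\<Prod>i=1..r. \<gamma> (n - k + j + i)) * E_det P k n (j + r - 1))) = 0"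
    by simp
qed

end
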